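(* For every $\rho>0$ and every $\rho$-patch $\mathcal P$ of $V$, $$\nu(B_{\mathcal P})=\prod_p\Big(1-\frac{|\mathcal P_p|}{p^2}\Big).$$
   Context: Throughout, $p$ denotes a prime. $V=\{x\in\mathbb Z^2:\gcd(x_1,x_2)=1\}$. For $X\subset\mathbb Z^2$, $X_p$ is the image of $X$ in $\mathbb Z^2/p\mathbb Z^2$. Subsets of $\mathbb Z^2$ are identified with elements of $\{0,1\}^{\mathbb Z^2}$ (product topology), and $\mathbb X_V:=\overline{\{t+V:t\in\mathbb Z^2\}}$, which equals the set of $A\subset\mathbb Z^2$ with $|A_p|<p^2$ for all $p$. A $\rho$-patch of $V$ is a set $(V-t)\cap B_\rho(0)$, $t\in\mathbb Z^2$; the cylinder set $C_{\mathcal P}$ is $\{X\in\mathbb X_V: X\cap B_\rho(0)=\mathcal P\}$, and $B_{\mathcal P}:=\{X\in\mathbb X_V: \mathcal P\subset X\cap B_\rho(0)\}$. $\nu$ is the unique Borel probability measure on $\mathbb X_V$ with $\nu(C_{\mathcal P})$ equal to the natural density of $\{t\in\mathbb Z^2:(V-t)\cap B_\rho(0)=\mathcal P\}$; this density is known to equal $\sum_{\mathcal F\subset(\mathbb Z^2\cap B_\rho(0))\setminus\mathcal P}(-1)^{|\mathcal F|}\prod_p\big(1-|(\mathcal P\cup\mathcal F)_p|/p^2\big)$. *)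

theory Defs
  imports "HOL-Analysis.Analysis" "HOL-Probability.Probability"
begin

text \<open>Points of Z^2 are pairs of integers; subsets of Z^2 are identified with their
  indicator functions in the product space (int \<times> int) \<Rightarrow> bool (product topology,
  bool discrete).\<close>

definition Vis :: "(int \<times> int) set" where
  "Vis = {x. gcd (fst x) (snd x) = 1}"

definition transl :: "int \<times> int \<Rightarrow> (int \<times> int) set \<Rightarrow> (int \<times> int) set" where
  "transl t A = (\<lambda>x. (fst x + fst t, snd x + snd t)) ` A"

definition red :: "nat \<Rightarrow> (int \<times> int) set \<Rightarrow> (int \<times> int) set" where
  "red p A = (\<lambda>x. (fst x mod int p, snd x mod int p)) ` A"

definition ballZ :: "real \<Rightarrow> (int \<times> int) set" where
  "ballZ \<rho> = {x. (real_of_int (fst x))\<^sup>2 + (real_of_int (snd x))\<^sup>2 < \<rho>\<^sup>2}"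

definition XV :: "((int \<times> int) \<Rightarrow> bool) set" where
  "XV = closure ((\<lambda>t. (\<lambda>x. x \<in> transl t Vis)) ` UNIV)"

definition is_patch :: "real \<Rightarrow> (int \<times> int) set \<Rightarrow> bool" where
  "is_patch \<rho> P \<longleftrightarrow> (\<exists>t. P = transl (- fst t, - snd t) Vis \<inter> ballZ \<rho>)"

definition cyl :: "real \<Rightarrow> (int \<times> int) set \<Rightarrow> ((int \<times> int) \<Rightarrow> bool) set" where
  "cyl \<rho> P = {X \<in> XV. {x. X x} \<inter> ballZ \<rho> = P}"

definition Bset :: "real \<Rightarrow> (int \<times> int) set \<Rightarrow> ((int \<times> int) \<Rightarrow> bool) set" where
  "Bset \<rho> P = {X \<in> XV. P \<subseteq> {x. X x} \<inter> ballZ \<rho>}"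

definition euler_prod :: "(int \<times> int) set \<Rightarrow> real" where
  "euler_prod A = (\<Prod>p. if prime p then 1 - real (card (red p A)) / (real p)\<^sup>2 else 1)"

text \<open>The (known) value of the natural density of the rho-patch P\<close>
definition patch_density :: "real \<Rightarrow> (int \<times> int) set \<Rightarrow> real" where
  "patch_density \<rho> P =
     (\<Sum>F\<in>Pow (ballZ \<rho> - P). (-1) ^ card F * euler_prod (P \<union> F))"

definition is_nu :: "((int \<times> int) \<Rightarrow> bool) measure \<Rightarrow> bool" where
  "is_nu M \<longleftrightarrow> prob_space M \<and> space M = XV \<and> sets M = sets (restrict_space borel XV) \<and>
     (\<forall>\<rho> P. \<rho> > 0 \<longrightarrow> is_patch \<rho> P \<longrightarrow> measure M (cyl \<rho> P) = patch_density \<rho> P)"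

end

theory Submission
  imports Defs
begin


lemma alt_sum_Pow:
  assumes "finite H"
  shows "(\<Sum>F\<in>Pow H. (-1::real) ^ card F) = (if H = {} then 1 else 0)"
  using assms
proof (induction H rule: finite_induct)
  case empty then show ?case by simp
next
  case (insert a H)
  have fin: "finite (Pow H)" using insert by simp
  have disj: "Pow H \<inter> insert a ` Pow H = {}" using insert by auto
  have inj: "inj_on (insert a) (Pow H)" using insert by (auto simp: inj_on_def)
  have "(\<Sum>F\<in>Pow (insert a H). (-1::real) ^ card F)
        = (\<Sum>F\<in>Pow H. (-1::real) ^ card F) + (\<Sum>F\<in>insert a ` Pow H. (-1::real) ^ card F)"
    unfolding Pow_insert by (rule sum.union_disjoint) (use fin disj in auto)
  also have "(\<Sum>F\<in>insert a ` Pow H. (-1::real) ^ card F) = (\<Sum>F\<in>Pow H. (-1::real) ^ card (insert a F))"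
    by (rule sum.reindex[OF inj, unfolded comp_def])
  also have "\<dots> = (\<Sum>F\<in>Pow H. - ((-1::real) ^ card F))"
  proof (rule sum.cong)
    fix F assume "F \<in> Pow H"
    then have "finite F" "a \<notin> F" using insert finite_subset by auto
    then show "(-1::real) ^ card (insert a F) = - ((-1) ^ card F)" by simp
  qed simp
  finally show ?case by (simp add: sum_negf)
qed

lemma alt_ind:
  assumes "finite B" "Q \<subseteq> B"
  shows "(\<Sum>F\<in>Pow (B - Q). (-1::real) ^ card F * (if Q \<union> F \<subseteq> G then 1 else 0))
         = (if Q = B \<inter> G then 1 else 0)"
proof (cases "Q \<subseteq> G")
  case False
  then show ?thesis by auto
next
  case True
  let ?H = "(B - Q) \<inter> G"
  have "(\<Sum>F\<in>Pow (B - Q). (-1::real) ^ card F * (if Q \<union> F \<subseteq> G then 1 else 0))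
     = (\<Sum>F\<in>Pow (B - Q). if F \<in> Pow ?H then (-1::real) ^ card F else 0)"
    by (rule sum.cong) (use True in auto)
  also have "\<dots> = (\<Sum>F\<in>Pow ?H. (-1::real) ^ card F)"
    by (subst sum.If_cases) (use assms in \<open>auto intro!: sum.cong\<close>)
  also have "\<dots> = (if ?H = {} then 1 else 0)" by (rule alt_sum_Pow) (use assms in auto)
  also have "(?H = {}) = (Q = B \<inter> G)" using True assms by auto
  finally show ?thesis .
qed



lemma ballZ_coord:
  fixes a b r :: real
  assumes "a\<^sup>2 + b\<^sup>2 < r\<^sup>2"
  shows "\<bar>a\<bar> < \<bar>r\<bar>"
proof -
  have "a\<^sup>2 < r\<^sup>2" using assms zero_le_power2[of b] by linarith
  then have "\<bar>a\<bar>\<^sup>2 < \<bar>r\<bar>\<^sup>2" by simp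
  then show ?thesis by (rule power2_less_imp_less) simp
qed

lemma ballZ_finite: "finite (ballZ r)"
proof -
  have "ballZ r \<subseteq> {-\<lceil>\<bar>r\<bar>\<rceil>..\<lceil>\<bar>r\<bar>\<rceil>} \<times> {-\<lceil>\<bar>r\<bar>\<rceil>..\<lceil>\<bar>r\<bar>\<rceil>}"
  proof
    fix x assume "x \<in> ballZ r"
    then have h: "(real_of_int (fst x))\<^sup>2 + (real_of_int (snd x))\<^sup>2 < r\<^sup>2" by (simp add: ballZ_def)
    have a: "\<bar>real_of_int (fst x)\<bar> < \<bar>r\<bar>" using ballZ_coord[OF h] .
    have b: "\<bar>real_of_int (snd x)\<bar> < \<bar>r\<bar>" using ballZ_coord[of "real_of_int (snd x)" "real_of_int (fst x)"] h by (simp add: add.commute)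
    have "real_of_int \<bar>fst x\<bar> < real_of_int \<lceil>\<bar>r\<bar>\<rceil>" using a le_of_int_ceiling[of "\<bar>r\<bar>"] of_int_abs[of "fst x"] by linarith
    then have c: "\<bar>fst x\<bar> \<le> \<lceil>\<bar>r\<bar>\<rceil>" by linarith
    have "real_of_int \<bar>snd x\<bar> < real_of_int \<lceil>\<bar>r\<bar>\<rceil>" using b le_of_int_ceiling[of "\<bar>r\<bar>"] of_int_abs[of "snd x"] by linarith
    then have d: "\<bar>snd x\<bar> \<le> \<lceil>\<bar>r\<bar>\<rceil>" by linarith
    show "x \<in> {-\<lceil>\<bar>r\<bar>\<rceil>..\<lceil>\<bar>r\<bar>\<rceil>} \<times> {-\<lceil>\<bar>r\<bar>\<rceil>..\<lceil>\<bar>r\<bar>\<rceil>}"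
      using c d by (cases x) auto
  qed
  then show ?thesis by (rule finite_subset) auto
qed

lemma open_agree:
  assumes "finite B"
  shows "open {Y :: (int\<times>int) \<Rightarrow> bool. \<forall>x\<in>B. Y x = X x}"
proof -
  have "{Y :: (int\<times>int) \<Rightarrow> bool. \<forall>x\<in>B. Y x = X x} = (\<Inter>x\<in>B. (\<lambda>Y. Y x) -` {X x})" by auto
  moreover have "open ((\<lambda>Y::(int\<times>int) \<Rightarrow> bool. Y x) -` {X x})" for x
    by (rule open_vimage[OF discrete_topology_class.open_discrete continuous_on_product_coordinates])
  ultimately show ?thesis using assms by auto
qed

lemma cyl_patch:
  assumes "X \<in> XV"
  shows "is_patch \<rho> ({x. X x} \<inter> ballZ \<rho>)"
proof -
  let ?U = "{Y :: (int\<times>int) \<Rightarrow> bool. \<forall>x\<in>ballZ \<rho>. Y x = X x}"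
  have "open ?U" by (rule open_agree[OF ballZ_finite])
  moreover have "X \<in> ?U" by simp
  ultimately have "?U \<inter> range (\<lambda>t. (\<lambda>x. x \<in> transl t Vis)) \<noteq> {}"
  proof -
    assume o: "open ?U" and m: "X \<in> ?U"
    have "?U \<inter> closure (range (\<lambda>t. (\<lambda>x. x \<in> transl t Vis))) \<noteq> {}"
      using m assms unfolding XV_def by blast
    then show ?thesis using open_Int_closure_eq_empty[OF o] by blast
  qed
  then obtain t where t: "\<forall>x\<in>ballZ \<rho>. (x \<in> transl t Vis) = X x" by auto
  have "{x. X x} \<inter> ballZ \<rho> = transl (- fst (- fst t, - snd t), - snd (- fst t, - snd t)) Vis \<inter> ballZ \<rho>"
    using t by auto
  then show ?thesis unfolding is_patch_def by blast
qed



definition gf :: "(int \<times> int) set \<Rightarrow> nat \<Rightarrow> real" where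
  "gf A p = (if prime p then 1 - real (card (red p A)) / (real p)\<^sup>2 else 1)"

definition eN :: "(int \<times> int) set \<Rightarrow> nat \<Rightarrow> real" where
  "eN A n = (\<Prod>p\<le>n. gf A p)"

lemma euler_prod_gf: "euler_prod A = prodinf (gf A)"
  unfolding euler_prod_def gf_def by (rule refl)

lemma card_red_le: "finite A \<Longrightarrow> card (red p A) \<le> card A"
  unfolding red_def by (rule card_image_le)

lemma gf_conv:
  assumes "finite A"
  shows "convergent_prod (gf A)"
proof -
  have s: "summable (\<lambda>n. real (card A) * inverse (real n ^ 2))"
    by (intro summable_mult inverse_power_summable) simp
  have "summable (\<lambda>i. norm (gf A i - 1))"
  proof (rule summable_comparison_test'[OF s])
    fix n :: nat assume "n \<ge> 0"
    have "norm (gf A n - 1) \<le> real (card (red n A)) / (real n)\<^sup>2"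
      by (simp add: gf_def)
    also have "\<dots> \<le> real (card A) / (real n)\<^sup>2"
      using card_red_le[OF assms, of n] by (simp add: divide_right_mono)
    finally show "norm (norm (gf A n - 1)) \<le> real (card A) * inverse (real n ^ 2)"
      by (simp add: divide_inverse)
  qed
  then show ?thesis
    by (intro abs_convergent_prod_imp_convergent_prod summable_imp_abs_convergent_prod)
qed

lemma eN_lim:
  assumes "finite A"
  shows "(\<lambda>n. eN A n) \<longlonglongrightarrow> euler_prod A"
  unfolding eN_def euler_prod_gf by (rule convergent_prod_LIMSEQ[OF gf_conv[OF assms]])

definition SP :: "nat \<Rightarrow> nat set" where "SP n = {p. prime p \<and> p \<le> n}"
definition RR :: "nat \<Rightarrow> (int \<times> int) set" where "RR p = {0..<int p} \<times> {0..<int p}"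
definition WW :: "nat \<Rightarrow> (nat \<Rightarrow> int \<times> int) \<Rightarrow> real" where
  "WW n f = (\<Prod>p\<in>SP n. 1 / (real p)\<^sup>2)"
definition GG :: "nat \<Rightarrow> (nat \<Rightarrow> int \<times> int) \<Rightarrow> (int \<times> int) set" where
  "GG n f = {x. \<forall>p\<in>SP n. (fst x mod int p, snd x mod int p) \<noteq> f p}"

lemma finite_SP: "finite (SP n)" unfolding SP_def by auto
lemma finite_RR: "finite (RR p)" unfolding RR_def by auto
lemma card_RR: "card (RR p) = p ^ 2" unfolding RR_def by (simp add: card_cartesian_product power2_eq_square)

lemma red_sub_RR: "p > 0 \<Longrightarrow> red p A \<subseteq> RR p"
  unfolding red_def RR_def by auto

lemma factor_sum:
  assumes "prime p" "finite A"
  shows "gf A p = (\<Sum>r\<in>RR p. 1 / (real p)\<^sup>2 * (if r \<notin> red p A then 1 else 0))"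
proof -
  have p0: "p > 0" using assms prime_gt_0_nat by blast
  have fr: "finite (red p A)" using assms unfolding red_def by simp
  have "(\<Sum>r\<in>RR p. 1 / (real p)\<^sup>2 * (if r \<notin> red p A then 1 else 0))
      = 1 / (real p)\<^sup>2 * real (card (RR p - red p A))"
  proof -
    have "(\<Sum>r\<in>RR p. (if r \<notin> red p A then 1 else 0::real)) = (\<Sum>r\<in>{r\<in>RR p. r \<notin> red p A}. 1)"
      by (rule sum.inter_filter[OF finite_RR, symmetric])
    also have "{r\<in>RR p. r \<notin> red p A} = RR p - red p A" by auto
    finally show ?thesis by (simp add: sum_divide_distrib[symmetric])
  qed
  also have "card (RR p - red p A) = p ^ 2 - card (red p A)"
    using card_Diff_subset[OF fr red_sub_RR[OF p0]] card_RR by simp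
  also have "real (p ^ 2 - card (red p A)) = (real p)\<^sup>2 - real (card (red p A))"
    using card_mono[OF finite_RR red_sub_RR[OF p0]] card_RR by (simp add: of_nat_diff)
  finally show ?thesis using assms p0 by (simp add: gf_def field_simps)
qed

lemma prod_ind: "finite S \<Longrightarrow> (\<Prod>p\<in>S. (if P p then 1 else 0::real)) = (if \<forall>p\<in>S. P p then 1 else 0)"
  by (induction S rule: finite_induct) auto

lemma eN_expand:
  assumes "finite A"
  shows "eN A n = (\<Sum>f\<in>PiE (SP n) RR. WW n f * (if A \<subseteq> GG n f then 1 else 0))"
proof -
  have "eN A n = (\<Prod>p\<in>{p\<in>{..n}. prime p}. gf A p)"
  proof -
    have e: "(\<lambda>p. if prime p then gf A p else 1) = gf A" by (auto simp: gf_def fun_eq_iff)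
    show ?thesis unfolding eN_def by (subst prod.inter_filter) (simp, unfold e, rule refl)
  qed
  also have "{p\<in>{..n}. prime p} = SP n" unfolding SP_def by auto
  also have "(\<Prod>p\<in>SP n. gf A p) = (\<Prod>p\<in>SP n. \<Sum>r\<in>RR p. 1 / (real p)\<^sup>2 * (if r \<notin> red p A then 1 else 0))"
    by (rule prod.cong[OF refl], rule factor_sum[OF _ assms], simp add: SP_def)
  also have "\<dots> = (\<Sum>f\<in>PiE (SP n) RR. \<Prod>p\<in>SP n. 1 / (real p)\<^sup>2 * (if f p \<notin> red p A then 1 else 0))"
    by (rule prod_sum_PiE) (auto simp: finite_SP finite_RR)
  also have "\<dots> = (\<Sum>f\<in>PiE (SP n) RR. WW n f * (if A \<subseteq> GG n f then 1 else 0))"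
  proof (rule sum.cong)
    fix f
    have "(\<Prod>p\<in>SP n. 1 / (real p)\<^sup>2 * (if f p \<notin> red p A then 1 else 0))
       = WW n f * (if \<forall>p\<in>SP n. f p \<notin> red p A then 1 else 0)"
      unfolding WW_def prod.distrib prod_ind[OF finite_SP] ..
    also have "(\<forall>p\<in>SP n. f p \<notin> red p A) = (A \<subseteq> GG n f)"
      unfolding GG_def red_def by (auto simp: image_iff; force)
    finally show "(\<Prod>p\<in>SP n. 1 / (real p)\<^sup>2 * (if f p \<notin> red p A then 1 else 0))
       = WW n f * (if A \<subseteq> GG n f then 1 else 0)" .
  qed simp
  finally show ?thesis .
qed

lemma WW_nonneg: "WW n f \<ge> 0" unfolding WW_def by (intro prod_nonneg) auto

definition dN :: "(int \<times> int) set \<Rightarrow> (int \<times> int) set \<Rightarrow> nat \<Rightarrow> real" where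
  "dN B Q n = (\<Sum>F\<in>Pow (B - Q). (-1) ^ card F * eN (Q \<union> F) n)"

lemma dN_expand:
  assumes "finite B" "Q \<subseteq> B"
  shows "dN B Q n = (\<Sum>f\<in>PiE (SP n) RR. WW n f * (if Q = B \<inter> GG n f then 1 else 0))"
proof -
  have fin: "F \<in> Pow (B - Q) \<Longrightarrow> finite (Q \<union> F)" for F
    using assms finite_subset by auto
  have "dN B Q n = (\<Sum>F\<in>Pow (B - Q). \<Sum>f\<in>PiE (SP n) RR. (-1) ^ card F * (WW n f * (if Q \<union> F \<subseteq> GG n f then 1 else 0)))"
    unfolding dN_def by (rule sum.cong) (auto simp: eN_expand[OF fin] sum_distrib_left)
  also have "\<dots> = (\<Sum>f\<in>PiE (SP n) RR. WW n f * (\<Sum>F\<in>Pow (B - Q). (-1) ^ card F * (if Q \<union> F \<subseteq> GG n f then 1 else 0)))"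
    by (subst sum.swap) (auto simp: sum_distrib_left mult.left_commute intro!: sum.cong)
  also have "\<dots> = (\<Sum>f\<in>PiE (SP n) RR. WW n f * (if Q = B \<inter> GG n f then 1 else 0))"
    by (rule sum.cong[OF refl], subst alt_ind[OF assms], rule refl)
  finally show ?thesis .
qed

lemma dN_nonneg: "finite B \<Longrightarrow> Q \<subseteq> B \<Longrightarrow> dN B Q n \<ge> 0"
  by (simp add: dN_expand WW_nonneg sum_nonneg)

lemma dN_sum:
  assumes "finite B" "P \<subseteq> B"
  shows "(\<Sum>Q\<in>{Q\<in>Pow B. P \<subseteq> Q}. dN B Q n) = eN P n"
proof -
  have "(\<Sum>Q\<in>{Q\<in>Pow B. P \<subseteq> Q}. dN B Q n)
      = (\<Sum>Q\<in>{Q\<in>Pow B. P \<subseteq> Q}. \<Sum>f\<in>PiE (SP n) RR. WW n f * (if Q = B \<inter> GG n f then 1 else 0))"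
    by (rule sum.cong) (auto simp: dN_expand[OF assms(1)])
  also have "\<dots> = (\<Sum>f\<in>PiE (SP n) RR. WW n f * (\<Sum>Q\<in>{Q\<in>Pow B. P \<subseteq> Q}. (if Q = B \<inter> GG n f then 1 else 0)))"
    by (subst sum.swap) (simp add: sum_distrib_left)
  also have "\<dots> = (\<Sum>f\<in>PiE (SP n) RR. WW n f * (if P \<subseteq> GG n f then 1 else 0))"
  proof (rule sum.cong)
    fix f
    have "(\<Sum>Q\<in>{Q\<in>Pow B. P \<subseteq> Q}. (if Q = B \<inter> GG n f then 1 else 0::real))
        = (if B \<inter> GG n f \<in> {Q\<in>Pow B. P \<subseteq> Q} then 1 else 0)"
      by (subst sum.delta) (use assms in auto)
    also have "(B \<inter> GG n f \<in> {Q\<in>Pow B. P \<subseteq> Q}) = (P \<subseteq> GG n f)" using assms by auto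
    finally show "WW n f * (\<Sum>Q\<in>{Q\<in>Pow B. P \<subseteq> Q}. (if Q = B \<inter> GG n f then 1 else 0))
        = WW n f * (if P \<subseteq> GG n f then 1 else 0)" by simp
  qed simp
  also have "\<dots> = eN P n" by (simp add: eN_expand[OF finite_subset[OF assms(2) assms(1)]])
  finally show ?thesis .
qed

definition dd :: "(int \<times> int) set \<Rightarrow> (int \<times> int) set \<Rightarrow> real" where
  "dd B Q = (\<Sum>F\<in>Pow (B - Q). (-1) ^ card F * euler_prod (Q \<union> F))"

lemma dN_lim:
  assumes "finite B" "Q \<subseteq> B"
  shows "(\<lambda>n. dN B Q n) \<longlonglongrightarrow> dd B Q"
  unfolding dN_def dd_def
proof (intro tendsto_sum tendsto_mult_left eN_lim)
  fix F assume "F \<in> Pow (B - Q)"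
  then show "finite (Q \<union> F)" using assms finite_subset by auto
qed

lemma dd_nonneg: "finite B \<Longrightarrow> Q \<subseteq> B \<Longrightarrow> dd B Q \<ge> 0"
  by (rule LIMSEQ_le_const[OF dN_lim]) (auto intro: dN_nonneg)

lemma dd_sum:
  assumes "finite B" "P \<subseteq> B"
  shows "(\<Sum>Q\<in>{Q\<in>Pow B. P \<subseteq> Q}. dd B Q) = euler_prod P"
proof (rule LIMSEQ_unique)
  show "(\<lambda>n. \<Sum>Q\<in>{Q\<in>Pow B. P \<subseteq> Q}. dN B Q n) \<longlonglongrightarrow> (\<Sum>Q\<in>{Q\<in>Pow B. P \<subseteq> Q}. dd B Q)"
    by (intro tendsto_sum dN_lim) (use assms in auto)
  show "(\<lambda>n. \<Sum>Q\<in>{Q\<in>Pow B. P \<subseteq> Q}. dN B Q n) \<longlonglongrightarrow> euler_prod P"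
    unfolding dN_sum[OF assms] by (rule eN_lim) (use assms finite_subset in auto)
qed

lemma euler_prod_empty: "euler_prod {} = 1"
proof (rule LIMSEQ_unique[OF eN_lim])
  have "gf {} = (\<lambda>_. 1)" by (auto simp: gf_def red_def fun_eq_iff)
  then show "(\<lambda>n. eN {} n) \<longlonglongrightarrow> 1" by (simp add: eN_def)
qed simp





lemma agree_iff: "Q \<subseteq> B \<Longrightarrow> ({x. X x} \<inter> B = Q) = (\<forall>x\<in>B. X x = (x \<in> Q))"
  by auto

lemma cyl_eq:
  assumes "Q \<subseteq> ballZ \<rho>"
  shows "cyl \<rho> Q = XV \<inter> {Y. \<forall>x\<in>ballZ \<rho>. Y x = (x \<in> Q)}"
  unfolding cyl_def
proof (rule set_eqI)
  fix X
  have "({x. X x} \<inter> ballZ \<rho> = Q) = (\<forall>x\<in>ballZ \<rho>. X x = (x \<in> Q))" by (rule agree_iff[OF assms])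
  then show "X \<in> {X \<in> XV. {x. X x} \<inter> ballZ \<rho> = Q} \<longleftrightarrow> X \<in> XV \<inter> {Y. \<forall>x\<in>ballZ \<rho>. Y x = (x \<in> Q)}"
    by (simp only: mem_Collect_eq Int_iff)
qed

lemma cyl_sets:
  assumes "is_nu M" "Q \<subseteq> ballZ \<rho>"
  shows "cyl \<rho> Q \<in> sets M"
proof -
  have "open {Y :: (int\<times>int) \<Rightarrow> bool. \<forall>x\<in>ballZ \<rho>. Y x = (\<lambda>x. x \<in> Q) x}"
    by (rule open_agree[OF ballZ_finite])
  then have o: "{Y :: (int\<times>int) \<Rightarrow> bool. \<forall>x\<in>ballZ \<rho>. Y x = (x \<in> Q)} \<in> sets borel" by simp
  have s: "sets M = (\<inter>) XV ` sets borel" using assms(1) unfolding is_nu_def sets_restrict_space by blast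
  show ?thesis unfolding cyl_eq[OF assms(2)] s using o by (rule imageI)
qed

lemma union_cyl:
  assumes "P \<subseteq> ballZ \<rho>"
  shows "Bset \<rho> P = (\<Union>Q\<in>{Q\<in>Pow (ballZ \<rho>). P \<subseteq> Q}. cyl \<rho> Q)"
proof (rule set_eqI, rule iffI)
  fix X assume "X \<in> Bset \<rho> P"
  then have "X \<in> XV" "P \<subseteq> {x. X x} \<inter> ballZ \<rho>" unfolding Bset_def by auto
  then have "X \<in> cyl \<rho> ({x. X x} \<inter> ballZ \<rho>)" "{x. X x} \<inter> ballZ \<rho> \<in> {Q\<in>Pow (ballZ \<rho>). P \<subseteq> Q}"
    unfolding cyl_def by auto
  then show "X \<in> (\<Union>Q\<in>{Q\<in>Pow (ballZ \<rho>). P \<subseteq> Q}. cyl \<rho> Q)" by blast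
next
  fix X assume "X \<in> (\<Union>Q\<in>{Q\<in>Pow (ballZ \<rho>). P \<subseteq> Q}. cyl \<rho> Q)"
  then obtain Q where "P \<subseteq> Q" "X \<in> cyl \<rho> Q" by blast
  then show "X \<in> Bset \<rho> P" unfolding cyl_def Bset_def by auto
qed

lemma measure_union_cyl:
  assumes "is_nu M" "S \<subseteq> Pow (ballZ \<rho>)"
  shows "measure M (\<Union>Q\<in>S. cyl \<rho> Q) = (\<Sum>Q\<in>S. measure M (cyl \<rho> Q))"
proof (rule measure_finite_Union)
  have "finite (Pow (ballZ \<rho>))" using ballZ_finite by simp
  then show "finite S" using assms(2) by (rule finite_subset[rotated])
  show "cyl \<rho> ` S \<subseteq> sets M"
  proof
    fix C assume "C \<in> cyl \<rho> ` S"
    then obtain Q where "Q \<in> S" "C = cyl \<rho> Q" by blast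
    then show "C \<in> sets M" using cyl_sets[OF assms(1)] assms(2) by blast
  qed
  show "disjoint_family_on (cyl \<rho>) S" unfolding disjoint_family_on_def cyl_def by auto
  fix Q assume "Q \<in> S"
  interpret prob_space M using assms(1) unfolding is_nu_def by blast
  show "emeasure M (cyl \<rho> Q) \<noteq> \<infinity>" by simp
qed


theorem corollaryA1:
  fixes \<nu> :: "((int \<times> int) \<Rightarrow> bool) measure" and \<rho> :: real and P :: "(int \<times> int) set"
  assumes "is_nu \<nu>" and "\<rho> > 0" and "is_patch \<rho> P"
  shows "measure \<nu> (Bset \<rho> P) = euler_prod P"
proof -
  let ?B = "ballZ \<rho>"
  have fB: "finite ?B" by (rule ballZ_finite)
  interpret prob_space \<nu> using assms(1) unfolding is_nu_def by blast
  have sp: "space \<nu> = XV" using assms(1) unfolding is_nu_def by blast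
  have PB: "P \<subseteq> ?B" using assms(3) unfolding is_patch_def by auto
  have pd: "patch_density \<rho> Q = dd ?B Q" for Q unfolding patch_density_def dd_def ..
  define m where "m Q = measure \<nu> (cyl \<rho> Q)" for Q
  have le: "m Q \<le> dd ?B Q" if "Q \<subseteq> ?B" for Q
  proof (cases "is_patch \<rho> Q")
    case True
    then show ?thesis using assms(1,2) unfolding m_def is_nu_def by (simp add: pd)
  next
    case False
    have "cyl \<rho> Q = {}" using False cyl_patch unfolding cyl_def by blast
    then show ?thesis using dd_nonneg[OF fB that] unfolding m_def by simp
  qed
  have "XV = Bset \<rho> {}" unfolding Bset_def by auto
  then have "1 = measure \<nu> (\<Union>Q\<in>{Q\<in>Pow ?B. {} \<subseteq> Q}. cyl \<rho> Q)"
    using prob_space sp union_cyl[of "{}" \<rho>] by simp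
  also have "\<dots> = (\<Sum>Q\<in>{Q\<in>Pow ?B. {} \<subseteq> Q}. m Q)"
    unfolding m_def by (rule measure_union_cyl[OF assms(1)]) auto
  finally have s1: "(\<Sum>Q\<in>Pow ?B. m Q) = 1" by (simp add: Pow_def)
  have s2: "(\<Sum>Q\<in>Pow ?B. dd ?B Q) = 1"
    using dd_sum[OF fB, of "{}"] euler_prod_empty by (simp add: Pow_def)
  have z: "(\<Sum>Q\<in>Pow ?B. dd ?B Q - m Q) = 0" unfolding sum_subtractf s1 s2 by simp
  have nn: "\<forall>Q\<in>Pow ?B. dd ?B Q - m Q \<ge> 0" using le by auto
  have fP: "finite (Pow ?B)" using fB by simp
  have eq: "\<forall>Q\<in>Pow ?B. dd ?B Q - m Q = 0"
    using sum_nonneg_eq_0_iff[OF fP, of "\<lambda>Q. dd ?B Q - m Q"] nn z by blast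
  have "measure \<nu> (Bset \<rho> P) = (\<Sum>Q\<in>{Q\<in>Pow ?B. P \<subseteq> Q}. m Q)"
    unfolding union_cyl[OF PB] m_def by (rule measure_union_cyl[OF assms(1)]) auto
  also have "\<dots> = (\<Sum>Q\<in>{Q\<in>Pow ?B. P \<subseteq> Q}. dd ?B Q)"
    by (rule sum.cong) (use eq in auto)
  also have "\<dots> = euler_prod P" by (rule dd_sum[OF fB PB])
  finally show ?thesis .
qed

end
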